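(* For a squarefree integer $d$, the curve $H^d: d y^2=(x^2-x-3)(x^2+2x-12)$ is everywhere locally solvable (has points over $\mathbb{R}$ and over $\mathbb{Q}_p$ for every prime $p$) if and only if every prime $p\mid d$ satisfies $(\tfrac{p}{13})=1$ or $p=13$.
   Context: $(\tfrac{p}{13})$ is the Legendre symbol. Local solvability refers to the smooth projective model of the genus one curve $d y^2=(x^2-x-3)(x^2+2x-12)$. *)

theory Defs
  imports "HOL-Number_Theory.Number_Theory" "HOL-Computational_Algebra.Squarefree" Complex_Main
begin

text \<open>The smooth projective model of d y^2 = F(x) is the curve
  d Y^2 = F(X,Z) in the weighted projective plane P(1,2,1),
  points being triples with (X,Z) nonzero, modulo (X,Y,Z) ~ (l X, l^2 Y, l Z).\<close>

definition Fh :: "'a::comm_ring_1 \<Rightarrow> 'a \<Rightarrow> 'a" where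
  "Fh X Z = (X^2 - X*Z - 3*Z^2) * (X^2 + 2*X*Z - 12*Z^2)"

text \<open>A p-adic integer is represented as a coherent sequence of integers:
  x k is its residue modulo p^k, and x (k+1) reduces to x k modulo p^k
  (Z_p = inverse limit of Z/p^k Z).\<close>

definition padic_int :: "nat \<Rightarrow> (nat \<Rightarrow> int) \<Rightarrow> bool" where
  "padic_int p x \<longleftrightarrow> (\<forall>k. [x (Suc k) = x k] (mod (int p ^ k)))"

definition padic_nonzero :: "nat \<Rightarrow> (nat \<Rightarrow> int) \<Rightarrow> bool" where
  "padic_nonzero p x \<longleftrightarrow> (\<exists>k. \<not> [x k = 0] (mod (int p ^ k)))"

text \<open>After scaling by a
  suitable power of p (X,Y,Z) -> (p^m X, p^(2m) Y, p^m Z), every Q_p-point has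
  coordinates in Z_p, so a Q_p-point exists iff there are X,Y,Z in Z_p with
  (X,Z) not both zero and d Y^2 = F(X,Z) in Z_p.\<close>

definition locally_solvable_at :: "int \<Rightarrow> nat \<Rightarrow> bool" where
  "locally_solvable_at d p \<longleftrightarrow>
     (\<exists>X Y Z. padic_int p X \<and> padic_int p Y \<and> padic_int p Z \<and>
        (padic_nonzero p X \<or> padic_nonzero p Z) \<and>
        (\<forall>k. [d * (Y k)^2 = Fh (X k) (Z k)] (mod (int p ^ k))))"

definition locally_solvable_real :: "int \<Rightarrow> bool" where
  "locally_solvable_real d \<longleftrightarrow>
     (\<exists>X Y Z :: real. (X \<noteq> 0 \<or> Z \<noteq> 0) \<and> of_int d * Y^2 = Fh X Z)"

definition everywhere_locally_solvable :: "int \<Rightarrow> bool" where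
  "everywhere_locally_solvable d \<longleftrightarrow>
     locally_solvable_real d \<and> (\<forall>p. prime p \<longrightarrow> locally_solvable_at d p)"

end

theory Submission
  imports Defs
begin

lemma prime13: "prime (13::nat)" by (simp add: prime_nat_iff' atLeastLessThan_upt upt_rec)
lemma prime13i: "prime (13::int)" using prime13 by simp

lemma Fh_hom: "Fh (a * x) (a * z) = a^4 * Fh x z"
  unfolding Fh_def by (simp add: power2_eq_square power4_eq_xxxx algebra_simps)

lemma Fh_cong: "[x = x'] (mod m) \<Longrightarrow> [z = z'] (mod m) \<Longrightarrow> [Fh x z = Fh x' z'] (mod m)"
  for x :: int
  unfolding Fh_def by (intro cong_mult cong_add cong_diff cong_pow) auto

lemma coherent_seq:
  fixes P :: "nat \<Rightarrow> int \<Rightarrow> bool"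
  assumes "P 0 t0" and step: "\<And>k t. P k t \<Longrightarrow> \<exists>t'. [t' = t] (mod (int p ^ k)) \<and> P (Suc k) t'"
  shows "\<exists>s. (\<forall>k. [s (Suc k) = s k] (mod (int p ^ k))) \<and> (\<forall>k. P k (s k))"
proof -
  define s where "s = rec_nat t0 (\<lambda>k t. SOME t'. [t' = t] (mod (int p ^ k)) \<and> P (Suc k) t')"
  have s0: "s 0 = t0" and sS: "\<And>k. s (Suc k) = (SOME t'. [t' = s k] (mod (int p ^ k)) \<and> P (Suc k) t')"
    by (simp_all add: s_def)
  have P: "P k (s k)" for k
  proof (induction k)
    case 0 then show ?case using assms(1) s0 by simp
  next
    case (Suc k) from someI_ex[OF step[OF Suc]] show ?case by (simp add: sS)
  qed
  have "[s (Suc k) = s k] (mod (int p ^ k))" for k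
    using someI_ex[OF step[OF P[of k]]] by (simp add: sS)
  then show ?thesis using P by blast
qed

lemma sqrt_odd:
  assumes p: "prime p" "p \<noteq> 2" and u: "\<not> int p dvd u" and y0: "[y0^2 = u] (mod int p)"
  shows "\<exists>s. padic_int p s \<and> padic_nonzero p s \<and> (\<forall>k. [s k ^ 2 = u] (mod int p ^ k))"
proof -
  have pi: "prime (int p)" using p by simp
  let ?P = "\<lambda>k t. [t^2 = u] (mod int p ^ Suc k)"
  have step: "\<exists>t'. [t' = t] (mod int p ^ k) \<and> ?P (Suc k) t'" if "?P k t" for k t
  proof -
    from that obtain e where e: "t^2 - u = int p ^ Suc k * e"
      by (metis cong_iff_dvd_diff dvd_def)
    have "\<not> int p dvd t"
    proof
      assume "int p dvd t"
      then have "int p dvd t^2" by (simp add: power2_eq_square)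
      moreover have "int p dvd t^2 - u" using e by simp
      ultimately have "int p dvd t^2 - (t^2 - u)" by (rule dvd_diff)
      then show False using u by simp
    qed
    moreover have "\<not> int p dvd 2"
    proof
      assume "int p dvd 2"
      then have "p dvd 2" by presburger
      then have "p \<le> 2" by (simp add: dvd_imp_le)
      with p prime_ge_2_nat[of p] show False by simp
    qed
    ultimately have "\<not> int p dvd 2 * t" using pi by (simp add: prime_dvd_mult_iff)
    then have "coprime (int p) (2*t)" by (rule prime_imp_coprime[OF pi])
    then have "coprime (2*t) (int p)" by (simp add: coprime_commute)
    then obtain w where w: "[2*t*w = 1] (mod int p)" using cong_solve_coprime_int by blast
    then obtain r where r: "1 - 2*t*w = int p * r" by (metis cong_iff_dvd_diff dvd_def cong_sym)
    define t' where "t' = t - int p ^ Suc k * e * w"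
    have "t' - t = int p ^ k * (- (int p * e * w))" by (simp add: t'_def algebra_simps)
    then have "[t' = t] (mod int p ^ k)" unfolding cong_iff_dvd_diff by (metis dvd_triv_left)
    moreover have "t'^2 - u = int p ^ Suc (Suc k) * (e * r + int p ^ k * e^2 * w^2)"
    proof -
      have "t'^2 - u = (t^2 - u) - 2*t*w * int p ^ Suc k * e + (int p ^ Suc k)^2 * e^2 * w^2"
        unfolding t'_def by (simp add: power2_eq_square algebra_simps)
      also have "\<dots> = int p ^ Suc k * e * (1 - 2*t*w) + (int p ^ Suc k)^2 * e^2 * w^2"
        using e by (simp add: algebra_simps)
      also have "\<dots> = int p ^ Suc (Suc k) * (e * r + int p ^ k * e^2 * w^2)"
        unfolding r by (simp add: power2_eq_square power_Suc algebra_simps power_add)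
      finally show ?thesis .
    qed
    then have "?P (Suc k) t'" unfolding cong_iff_dvd_diff by (simp del: power_Suc)
    ultimately show ?thesis by blast
  qed
  have P0: "?P 0 y0" using y0 by simp
  obtain s where s: "\<forall>k. [s (Suc k) = s k] (mod (int p ^ k))" "\<forall>k. ?P k (s k)"
    using coherent_seq[of ?P, OF P0 step] by blast
  have sq: "[s k ^ 2 = u] (mod int p ^ k)" for k
    using s(2) cong_dvd_modulus[of _ _ "int p ^ Suc k" "int p ^ k"] by (simp add: le_imp_power_dvd)
  have "\<not> [s 1 = 0] (mod int p ^ 1)"
  proof
    assume "[s 1 = 0] (mod int p ^ 1)"
    then have "[s 1 ^ 2 = 0 ^ 2] (mod int p)" using cong_pow[of "s 1" 0 "int p" 2] by simp
    moreover have "[s 1 ^ 2 = u] (mod int p)" using sq[of 1] by simp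
    ultimately have "[u = 0] (mod int p)" by (metis cong_sym cong_trans zero_power2)
    then show False using u by (simp add: cong_0_iff)
  qed
  then have "padic_nonzero p s" unfolding padic_nonzero_def by blast
  moreover have "padic_int p s" unfolding padic_int_def using s(1) by blast
  ultimately show ?thesis using sq by blast
qed

lemma sqrt_2:
  assumes u: "[u = 1] (mod 8)"
  shows "\<exists>s. padic_int 2 s \<and> padic_nonzero 2 s \<and> (\<forall>k. [s k ^ 2 = u] (mod int 2 ^ k))"
proof -
  let ?P = "\<lambda>k t. [t^2 = u] (mod 2 ^ (k+3)) \<and> odd t"
  have step: "\<exists>t'. [t' = t] (mod int 2 ^ k) \<and> ?P (Suc k) t'" if "?P k t" for k t
  proof -
    from that obtain e where e: "t^2 - u = 2 ^ (k+3) * e"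
      by (metis cong_iff_dvd_diff dvd_def)
    from that obtain a where a: "t = 2*a+1" by (meson oddE)
    define t' where "t' = t + 2^(k+2) * e"
    have "t' - t = int 2 ^ k * (4*e)" by (simp add: t'_def power_add)
    then have "[t' = t] (mod int 2 ^ k)" unfolding cong_iff_dvd_diff by (metis dvd_triv_left)
    moreover have "t'^2 - u = 2 ^ (Suc k + 3) * (e * (a+1) + 2^k * e^2)"
    proof -
      have "t'^2 - u = (t^2 - u) + 2 * t * 2^(k+2) * e + (2^(k+2))^2 * e^2"
        unfolding t'_def by (simp add: power2_eq_square algebra_simps)
      also have "\<dots> = 2 ^ (k+3) * e * (1 + t) + (2^(k+2))^2 * e^2"
        using e by (simp add: algebra_simps power_add)
      also have "\<dots> = 2 ^ (Suc k + 3) * (e * (a+1) + 2^k * e^2)"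
        unfolding a by (simp add: power2_eq_square algebra_simps power_add)
      finally show ?thesis .
    qed
    then have "[t'^2 = u] (mod 2 ^ (Suc k + 3))" unfolding cong_iff_dvd_diff
      by (metis dvd_triv_left)
    moreover have "odd t'" using that by (simp add: t'_def power_add)
    ultimately show ?thesis by blast
  qed
  have P0: "?P 0 1" using u by (simp add: cong_sym)
  obtain s where s: "\<forall>k. [s (Suc k) = s k] (mod (int 2 ^ k))" "\<forall>k. ?P k (s k)"
    using coherent_seq[of ?P, OF P0 step] by blast
  have sq: "[s k ^ 2 = u] (mod int 2 ^ k)" for k
    using s(2) cong_dvd_modulus[of _ _ "2 ^ (k+3)" "int 2 ^ k"] by (simp add: le_imp_power_dvd)
  have "\<not> [s 1 = 0] (mod int 2 ^ 1)" using s(2) by (simp add: cong_0_iff)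
  then have "padic_nonzero 2 s" unfolding padic_nonzero_def by blast
  moreover have "padic_int 2 s" unfolding padic_int_def using s(1) by blast
  ultimately show ?thesis using sq by blast
qed

lemma point_from_sqrt:
  assumes "padic_int p s" "padic_nonzero p s" "\<forall>k. [s k ^ 2 = c * d] (mod int p ^ k)"
    "Fh x0 1 = c * m^2"
  shows "locally_solvable_at d p"
proof -
  have eq: "[d * (m*c*s k)^2 = Fh (x0 * s k) (s k)] (mod int p ^ k)" for k
  proof -
    have e1: "Fh (x0 * s k) (s k) = (m^2*c*s k ^2) * (s k ^ 2)"
      using Fh_hom[of "s k" x0 1] assms(4) by (simp add: power2_eq_square power4_eq_xxxx algebra_simps)
    have e2: "d * (m*c*s k)^2 = (m^2*c*s k ^2) * (c * d)"
      by (simp add: power2_eq_square algebra_simps)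
    have "[(m^2*c*s k ^2) * (c * d) = (m^2*c*s k ^2) * (s k ^ 2)] (mod int p ^ k)"
      using assms(3) by (intro cong_mult) (auto simp: cong_sym)
    then show ?thesis by (simp only: e1 e2)
  qed
  have "padic_int p (\<lambda>k. x0 * s k)" "padic_int p (\<lambda>k. m*c*s k)"
    using assms(1) unfolding padic_int_def by (auto intro: cong_mult)
  then show ?thesis unfolding locally_solvable_at_def using assms(1,2) eq by blast
qed

lemma root_point:
  assumes p: "prime p" "p \<noteq> 2" "p \<noteq> 13" and q: "QuadRes (int p) 13"
  shows "locally_solvable_at d p"
proof -
  from q obtain y0 where y0: "[y0^2 = 13] (mod int p)" unfolding QuadRes_def by blast
  have "\<not> int p dvd 13"
  proof
    assume "int p dvd 13"
    then have "p dvd 13" by presburger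
    then have "p = 1 \<or> p = 13" using prime13 prime_nat_iff by blast
    then show False using p by auto
  qed
  then obtain s where s: "padic_int p s" "\<forall>k. [s k ^ 2 = 13] (mod int p ^ k)"
    using sqrt_odd[OF p(1,2) _ y0] by blast
  have "\<not> [2 = 0] (mod int p ^ 1)"
  proof
    assume "[2 = 0] (mod int p ^ 1)"
    then have "int p dvd 2" by (simp add: cong_0_iff)
    then have "p dvd 2" by presburger
    then have "p = 1 \<or> p = 2" using two_is_prime_nat prime_nat_iff by blast
    then show False using p by auto
  qed
  then have nz: "padic_nonzero p (\<lambda>k. 2)" unfolding padic_nonzero_def by blast
  have eq: "[d * 0^2 = Fh (1 + s k) 2] (mod int p ^ k)" for k
  proof -
    have "Fh (1 + s k) 2 = (s k ^ 2 - 13) * ((1 + s k)^2 + 4*(1 + s k) - 48)"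
      unfolding Fh_def by (simp add: power2_eq_square algebra_simps)
    moreover have "[(s k ^ 2 - 13) * ((1 + s k)^2 + 4*(1 + s k) - 48) = 0 * ((1 + s k)^2 + 4*(1 + s k) - 48)] (mod int p ^ k)"
      using s(2) by (intro cong_mult) (auto simp: cong_iff_dvd_diff)
    ultimately show ?thesis by (simp add: cong_sym)
  qed
  have "padic_int p (\<lambda>k. 1 + s k)" "padic_int p (\<lambda>k. 0)" "padic_int p (\<lambda>k. 2)"
    using s(1) unfolding padic_int_def by (auto intro: cong_add)
  then show ?thesis unfolding locally_solvable_at_def using nz eq by blast
qed

lemma Legendre_vals: "Legendre a p \<in> {-1, 0, 1}"
  by (simp add: Legendre_def)

lemma Legendre_mult:
  assumes "prime p" "2 < p"
  shows "Legendre (a*b) (int p) = Legendre a (int p) * Legendre b (int p)"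
proof -
  have "[Legendre (a*b) (int p) = (a*b) ^ ((p - 1) div 2)] (mod int p)"
    using euler_criterion[OF assms] by simp
  moreover have "[Legendre a (int p) * Legendre b (int p) = a ^ ((p - 1) div 2) * b ^ ((p - 1) div 2)] (mod int p)"
    using euler_criterion[OF assms] by (intro cong_mult) auto
  ultimately have "[Legendre (a*b) (int p) = Legendre a (int p) * Legendre b (int p)] (mod int p)"
    by (metis cong_sym cong_trans power_mult_distrib)
  then have d: "int p dvd Legendre (a*b) (int p) - Legendre a (int p) * Legendre b (int p)"
    by (simp add: cong_iff_dvd_diff)
  have "\<bar>Legendre (a*b) (int p) - Legendre a (int p) * Legendre b (int p)\<bar> \<le> 2"
    using Legendre_vals[of "a*b" "int p"] Legendre_vals[of a "int p"] Legendre_vals[of b "int p"]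
    by auto
  show ?thesis
  proof (rule ccontr)
    assume "\<not> ?thesis"
    then have "\<bar>int p\<bar> \<le> \<bar>Legendre (a*b) (int p) - Legendre a (int p) * Legendre b (int p)\<bar>"
      using d by (intro dvd_imp_le_int) auto
    with \<open>\<bar>_\<bar> \<le> 2\<close> assms(2) show False by simp
  qed
qed

lemma Legendre_recip13:
  assumes "prime p" "2 < p" "p \<noteq> 13"
  shows "Legendre (int p) 13 = Legendre 13 (int p)"
proof -
  have "Legendre (int p) (int 13) * Legendre (int 13) (int p) = (-1::int) ^ ((p - 1) div 2 * ((13 - 1) div 2))"
    using Quadratic_Reciprocity[OF assms(1,2) prime13] assms by simp
  also have "\<dots> = 1" by (subst mult.commute) (simp add: power_mult)
  finally have "Legendre (int p) 13 * Legendre 13 (int p) = 1" by simp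
  then show ?thesis
    using Legendre_vals[of "int p" 13] Legendre_vals[of 13 "int p"] by auto
qed

lemma Legendre_1_13: "Legendre 1 13 = 1"
proof -
  have "QuadRes 13 1" unfolding QuadRes_def by (rule exI[of _ 1]) (simp add: cong_def)
  then show ?thesis by (simp add: Legendre_def cong_def)
qed

lemma Legendre_m1_13: "Legendre (-1) 13 = 1"
proof -
  have "QuadRes 13 (-1)" unfolding QuadRes_def by (rule exI[of _ 5]) (simp add: cong_def)
  then show ?thesis by (simp add: Legendre_def cong_def)
qed

lemma Legendre_17_13: "Legendre 17 13 = 1"
proof -
  have "QuadRes 13 17" unfolding QuadRes_def by (rule exI[of _ 2]) (simp add: cong_def)
  then show ?thesis by (simp add: Legendre_def cong_def)
qed

lemma Legendre_2_13: "Legendre 2 13 = -1"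
proof -
  have "\<not> QuadRes 13 2"
  proof
    assume "QuadRes 13 2"
    then obtain y :: int where y: "[y^2 = 2] (mod 13)" unfolding QuadRes_def by blast
    define r where "r = y mod 13"
    have "r^2 mod 13 = 2" using y unfolding r_def cong_def by (simp add: power_mod)
    moreover have "0 \<le> r" "r < 13" unfolding r_def by auto
    moreover have "\<forall>j\<in>{..<13::nat}. (int j)^2 mod 13 \<noteq> 2"
      by (simp add: lessThan_nat_numeral)
    ultimately have "nat r \<in> {..<13::nat}" "(int (nat r))^2 mod 13 = 2" by auto
    with \<open>\<forall>j\<in>_. _\<close> show False by blast
  qed
  then show ?thesis by (simp add: Legendre_def cong_def)
qed

lemma Legendre_mult13: "Legendre (a*b) 13 = Legendre a 13 * Legendre b 13"
  using Legendre_mult[OF prime13, of a b] by simp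

lemma Legendre_prod13:
  fixes n :: int
  assumes "n \<noteq> 0" "\<forall>q::nat. prime q \<and> int q dvd n \<longrightarrow> Legendre (int q) 13 = 1"
  shows "Legendre n 13 = 1"
  using assms
proof (induction "nat \<bar>n\<bar>" arbitrary: n rule: less_induct)
  case less
  show ?case
  proof (cases "nat \<bar>n\<bar> = 1")
    case True
    then have "n = 1 \<or> n = -1" by linarith
    then show ?thesis using Legendre_1_13 Legendre_m1_13 by auto
  next
    case False
    then obtain q where q: "prime q" "q dvd nat \<bar>n\<bar>" using prime_factor_nat by blast
    have "int q dvd int (nat \<bar>n\<bar>)" using q(2) by (simp only: of_nat_dvd_iff)
    then have qn: "int q dvd n" by simp
    then obtain m where m: "n = int q * m" by blast
    have m0: "m \<noteq> 0" using less.prems m by auto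
    have q2: "int q \<ge> 2" using prime_ge_2_nat[OF q(1)] by simp
    have "\<bar>n\<bar> = int q * \<bar>m\<bar>" using m by (simp add: abs_mult)
    moreover have "2 * \<bar>m\<bar> \<le> int q * \<bar>m\<bar>" by (rule mult_right_mono[OF q2]) simp
    moreover have "\<bar>m\<bar> > 0" using m0 by simp
    ultimately have "\<bar>m\<bar> < \<bar>n\<bar>" by linarith
    then have lt: "nat \<bar>m\<bar> < nat \<bar>n\<bar>" by simp
    have "\<forall>q'::nat. prime q' \<and> int q' dvd m \<longrightarrow> Legendre (int q') 13 = 1"
      using less.prems(2) m by auto
    then have "Legendre m 13 = 1" using less.hyps[OF lt m0] by blast
    moreover have "Legendre (int q) 13 = 1" using less.prems(2) q(1) qn by blast
    ultimately show ?thesis using m Legendre_mult13 by simp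
  qed
qed

lemma padic_coh:
  assumes "padic_int p x" "K \<le> n"
  shows "[x n = x K] (mod int p ^ K)"
  using assms(2)
proof (induction n)
  case 0 then show ?case by simp
next
  case (Suc n)
  show ?case
  proof (cases "K = Suc n")
    case True then show ?thesis by simp
  next
    case False
    then have "K \<le> n" using Suc.prems by simp
    then have "[x n = x K] (mod int p ^ K)" using Suc.IH by simp
    moreover have "[x (Suc n) = x n] (mod int p ^ K)"
      using assms(1) \<open>K \<le> n\<close> unfolding padic_int_def
      by (meson cong_dvd_modulus le_imp_power_dvd)
    ultimately show ?thesis by (rule cong_trans[rotated])
  qed
qed

lemma exists_step: "P 0 \<Longrightarrow> \<not> P K \<Longrightarrow> \<exists>m<K. P m \<and> \<not> P (Suc m)"
proof (induction K)
  case 0 then show ?case by simp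
next
  case (Suc K)
  show ?case
  proof (cases "P K")
    case True then show ?thesis using Suc.prems by blast
  next
    case False
    then obtain m where "m < K" "P m" "\<not> P (Suc m)" using Suc.IH Suc.prems by blast
    then show ?thesis by (intro exI[of _ m]) simp
  qed
qed

lemma parity:
  assumes p: "prime p" and sq: "squarefree d" and pd: "int p dvd d"
    and h: "int p ^ (2*j) dvd d * y^2"
  shows "int p ^ (2*j+1) dvd d * y^2"
proof (cases "y = 0")
  case True then show ?thesis by simp
next
  case False
  have pi: "prime (int p)" using p by simp
  then have pe: "prime_elem (int p)" by (rule prime_imp_prime_elem)
  have nu: "\<not> is_unit (int p)" using pi not_prime_unit by blast
  have d0: "d \<noteq> 0" using sq by auto
  have "\<not> int p ^ 2 dvd d" using sq nu squarefreeD by blast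
  then have "multiplicity (int p) d < 2" by (rule multiplicity_lessI[OF d0 nu])
  moreover have "1 \<le> multiplicity (int p) d" using pd multiplicity_geI[OF d0 nu, of 1] by simp
  ultimately have m1: "multiplicity (int p) d = 1" by simp
  have "multiplicity (int p) (d * y^2) = multiplicity (int p) d + 2 * multiplicity (int p) y"
    using pe d0 False by (simp add: prime_elem_multiplicity_mult_distrib prime_elem_multiplicity_power_distrib)
  then have me: "multiplicity (int p) (d * y^2) = 1 + 2 * multiplicity (int p) y" using m1 by simp
  have dy0: "d * y^2 \<noteq> 0" using d0 False by simp
  have "2*j \<le> multiplicity (int p) (d * y^2)" using multiplicity_geI[OF dy0 nu h] .
  then have "2*j+1 \<le> multiplicity (int p) (d * y^2)" using me by simp
  then show ?thesis by (rule multiplicity_dvd')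
qed

lemma nonres_dvd:
  assumes pi: "prime (int p)" and nq: "\<not> QuadRes (int p) 13" and h: "int p dvd A^2 - 13 * z^2"
  shows "int p dvd z"
proof (rule ccontr)
  assume nz: "\<not> int p dvd z"
  then have "coprime (int p) z" by (rule prime_imp_coprime[OF pi])
  then have "coprime z (int p)" by (simp add: coprime_commute)
  then obtain w where w: "[z * w = 1] (mod int p)" using cong_solve_coprime_int by blast
  have "[A^2 = 13 * z^2] (mod int p)" using h by (simp add: cong_iff_dvd_diff)
  then have "[A^2 * w^2 = 13 * z^2 * w^2] (mod int p)" by (rule cong_mult) simp
  moreover have "[(z*w)^2 = 1^2] (mod int p)" using w by (rule cong_pow)
  then have "[13 * (z*w)^2 = 13] (mod int p)" using cong_mult[OF cong_refl[of 13]] by fastforce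
  ultimately have "[(A*w)^2 = 13] (mod int p)"
    by (metis (no_types, lifting) cong_trans mult.assoc power_mult_distrib)
  then show False using nq unfolding QuadRes_def by blast
qed

lemma key_odd:
  assumes p: "prime p" "p \<noteq> 2" and nq: "\<not> QuadRes (int p) 13"
    and xz: "\<not> (int p dvd x \<and> int p dvd z)"
  shows "\<not> int p dvd Fh x z"
proof
  assume h: "int p dvd Fh x z"
  have pi: "prime (int p)" using p by simp
  have n2: "\<not> int p dvd 2"
  proof
    assume "int p dvd 2"
    then have "p dvd 2" by presburger
    then have "p = 1 \<or> p = 2" using two_is_prime_nat prime_nat_iff by blast
    then show False using p by auto
  qed
  have "int p dvd (x^2 - x*z - 3*z^2) \<or> int p dvd (x^2 + 2*x*z - 12*z^2)"
    using h pi unfolding Fh_def by (simp add: prime_dvd_mult_iff)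
  then show False
  proof
    assume a: "int p dvd (x^2 - x*z - 3*z^2)"
    have e: "4 * (x^2 - x*z - 3*z^2) = (2*x - z)^2 - 13 * z^2" by (simp add: power2_eq_square algebra_simps)
    have "int p dvd 4 * (x^2 - x*z - 3*z^2)" using a by (rule dvd_mult)
    then have "int p dvd (2*x - z)^2 - 13 * z^2" by (simp only: e)
    then have zz: "int p dvd z" by (rule nonres_dvd[OF pi nq])
    then have "int p dvd 13 * z^2" by (simp add: power2_eq_square)
    then have "int p dvd (2*x - z)^2" using \<open>int p dvd (2*x - z)^2 - 13 * z^2\<close>
      by (metis diff_add_cancel dvd_add)
    then have "int p dvd 2*x - z" by (rule prime_dvd_power[OF pi])
    then have "int p dvd 2*x" using zz by (metis diff_add_cancel dvd_add)
    then have "int p dvd x" using pi n2 by (simp add: prime_dvd_mult_iff)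
    then show False using xz zz by blast
  next
    assume a: "int p dvd (x^2 + 2*x*z - 12*z^2)"
    have e: "x^2 + 2*x*z - 12*z^2 = (x + z)^2 - 13 * z^2" by (simp add: power2_eq_square algebra_simps)
    have "int p dvd (x + z)^2 - 13 * z^2" using a by (simp only: e)
    then have zz: "int p dvd z" by (rule nonres_dvd[OF pi nq])
    then have "int p dvd 13 * z^2" by (simp add: power2_eq_square)
    then have "int p dvd (x + z)^2" using \<open>int p dvd (x + z)^2 - 13 * z^2\<close>
      by (metis diff_add_cancel dvd_add)
    then have "int p dvd x + z" by (rule prime_dvd_power[OF pi])
    then have "int p dvd x" using zz by (metis add_diff_cancel dvd_diff)
    then show False using xz zz by blast
  qed
qed

lemma key2_mod8:
  fixes x z :: int
  assumes "\<not> (even x \<and> even z)"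
  shows "Fh x z mod 8 \<in> {1,3,4,5,7}"
proof -
  define a where "a = nat (x mod 8)"
  define b where "b = nat (z mod 8)"
  have ax: "int a = x mod 8" "int b = z mod 8" unfolding a_def b_def by auto
  have "[Fh x z = Fh (int a) (int b)] (mod 8)"
    unfolding ax by (intro Fh_cong) (auto simp: cong_def)
  then have f: "Fh x z mod 8 = Fh (int a) (int b) mod 8" by (simp add: cong_def)
  have ab: "a \<in> {..<8}" "b \<in> {..<8}" unfolding a_def b_def by auto
  have ev: "\<not> (even a \<and> even b)" using assms ax
    by (metis even_of_nat even_mod_2_iff dvd_mod_iff even_numeral) 
  have all: "\<forall>a\<in>{..<8::nat}. \<forall>b\<in>{..<8::nat}. \<not> (even a \<and> even b) \<longrightarrow> Fh (int a) (int b) mod 8 \<in> {1,3,4,5,7}"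
    by (simp add: lessThan_nat_numeral Fh_def)
  show ?thesis using all ab ev f by auto
qed

lemma obstruct:
  assumes p: "prime p" and sq: "squarefree d" and pd: "int p dvd d"
  and key: "\<And>x z. \<not> (int p dvd x \<and> int p dvd z) \<Longrightarrow>
     \<exists>e. even e \<and> e \<le> 2 \<and> int p ^ e dvd Fh x z \<and> \<not> int p ^ (e+1) dvd Fh x z"
  shows "\<not> locally_solvable_at d p"
proof
  assume "locally_solvable_at d p"
  then obtain X Y Z where XI: "padic_int p X" and ZI: "padic_int p Z"
    and nz: "padic_nonzero p X \<or> padic_nonzero p Z"
    and eq: "\<forall>k. [d * (Y k)^2 = Fh (X k) (Z k)] (mod (int p ^ k))"
    unfolding locally_solvable_at_def by blast
  let ?p = "int p"
  obtain K where K: "\<not> (?p^K dvd X K \<and> ?p^K dvd Z K)"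
    using nz unfolding padic_nonzero_def by (auto simp: cong_0_iff)
  obtain m where m: "m < K" "?p^m dvd X K \<and> ?p^m dvd Z K" "\<not> (?p^Suc m dvd X K \<and> ?p^Suc m dvd Z K)"
    using exists_step[of "\<lambda>j. ?p^j dvd X K \<and> ?p^j dvd Z K" K] K by auto
  define n where "n = K + 4*m + 3"
  have cX: "[X n = X K] (mod ?p ^ K)" "[Z n = Z K] (mod ?p ^ K)"
    using padic_coh[OF XI] padic_coh[OF ZI] n_def by auto
  have dv1: "?p^m dvd ?p^K" "?p^Suc m dvd ?p^K" using m(1)
    by (simp_all only: le_imp_power_dvd less_imp_le_nat Suc_leI)
  have c1: "[X n = X K] (mod ?p ^ m)" "[Z n = Z K] (mod ?p ^ m)"
    using cX dv1 cong_dvd_modulus by blast+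
  have c2: "[X n = X K] (mod ?p ^ Suc m)" "[Z n = Z K] (mod ?p ^ Suc m)"
    using cX dv1 cong_dvd_modulus by blast+
  have "?p^m dvd X n" "?p^m dvd Z n" using c1 m(2) cong_dvd_iff by blast+
  then obtain x z where xz: "X n = ?p^m * x" "Z n = ?p^m * z" by (meson dvdE)
  have nxz: "\<not> (?p dvd x \<and> ?p dvd z)"
  proof
    assume "?p dvd x \<and> ?p dvd z"
    then have "?p^Suc m dvd X n \<and> ?p^Suc m dvd Z n" using xz by (auto simp: mult_dvd_mono)
    then show False using c2 m(3) cong_dvd_iff by blast
  qed
  obtain e where e: "even e" "e \<le> 2" "?p^e dvd Fh x z" "\<not> ?p^(e+1) dvd Fh x z"
    using key[OF nxz] by blast
  have F: "Fh (X n) (Z n) = ?p^(4*m) * Fh x z"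
    using Fh_hom[of "?p^m" x z] xz by (simp add: power_mult[symmetric] mult.commute)
  have p0: "?p \<noteq> 0" using p by simp
  have pw1: "?p^(4*m+e) = ?p^(4*m) * ?p^e" "?p^(4*m+e+1) = ?p^(4*m) * ?p^(e+1)"
    by (simp_all add: power_add)
  have d1: "?p^(4*m+e) dvd Fh (X n) (Z n)" unfolding F pw1 using e(3) by simp
  have d2: "\<not> ?p^(4*m+e+1) dvd Fh (X n) (Z n)" unfolding F pw1 using e(4) p0 by simp
  have le: "4*m+e+1 \<le> n" "4*m+e \<le> n" using e(2) n_def by auto
  have "[d * Y n^2 = Fh (X n) (Z n)] (mod ?p^(4*m+e+1))"
    using eq le(1) cong_dvd_modulus le_imp_power_dvd by blast
  then have h1: "\<not> ?p^(4*m+e+1) dvd d * Y n^2" using d2 cong_dvd_iff by blast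
  have "[d * Y n^2 = Fh (X n) (Z n)] (mod ?p^(4*m+e))"
    using eq le(2) cong_dvd_modulus le_imp_power_dvd by blast
  then have h2: "?p^(4*m+e) dvd d * Y n^2" using d1 cong_dvd_iff by blast
  obtain j where j: "4*m+e = 2*j" using e(1) by (metis dvd_add even_mult_iff even_numeral evenE)
  show False using parity[OF p sq pd, of j "Y n"] h1 h2 j by simp
qed

lemma key2:
  assumes "\<not> (int 2 dvd x \<and> int 2 dvd z)"
  shows "\<exists>e. even e \<and> e \<le> 2 \<and> int 2 ^ e dvd Fh x z \<and> \<not> int 2 ^ (e+1) dvd Fh x z"
proof -
  have "\<not> (even x \<and> even z)" using assms by simp
  then have r: "Fh x z mod 8 \<in> {1,3,4,5,7}" by (rule key2_mod8)
  have a: "f mod 8 = (4::int) \<Longrightarrow> 4 dvd f \<and> \<not> 8 dvd f" for f by presburger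
  have b: "f mod 8 = 1 \<or> f mod 8 = 3 \<or> f mod 8 = 5 \<or> f mod 8 = (7::int) \<Longrightarrow> \<not> 2 dvd f" for f by presburger
  show ?thesis
  proof (cases "Fh x z mod 8 = 4")
    case True
    then show ?thesis using a[OF True] by (intro exI[of _ 2]) simp
  next
    case False
    then have "\<not> 2 dvd Fh x z" using r b by auto
    then show ?thesis by (intro exI[of _ 0]) simp
  qed
qed

lemma dvd13_nat: "prime p \<Longrightarrow> int p dvd 13 \<Longrightarrow> p = 13"
proof -
  assume "prime p" "int p dvd 13"
  then have "int p dvd int 13" by simp
  then have "p dvd 13" by (simp only: of_nat_dvd_iff)
  then have "p = 1 \<or> p = 13" using prime13 prime_nat_iff by blast
  then show "p = 13" using \<open>prime p\<close> by auto
qed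

lemma dvd13_nat': "prime p \<Longrightarrow> 13 dvd int p \<Longrightarrow> p = 13"
proof -
  assume "prime p" "13 dvd int p"
  then have "int 13 dvd int p" by simp
  then have "13 dvd p" by (simp only: of_nat_dvd_iff)
  then have "(13::nat) = 1 \<or> 13 = p" using \<open>prime p\<close> prime_nat_iff by blast
  then show "p = 13" by auto
qed

lemma real_part:
  assumes "d \<noteq> 0"
  shows "locally_solvable_real d"
proof (cases "d > 0")
  case True
  have "of_int d * (6 / sqrt (of_int d))^2 = Fh (0::real) 1"
    using True by (simp add: Fh_def power_divide)
  moreover have "(0::real) \<noteq> 0 \<or> (1::real) \<noteq> 0" by simp
  ultimately show ?thesis unfolding locally_solvable_real_def by blast
next
  case False
  then have "d < 0" using assms by simp
  have "of_int d * (6 / sqrt (- of_int d))^2 = Fh (-2::real) 1"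
    using \<open>d < 0\<close> by (simp add: Fh_def power_divide)
  moreover have "(-2::real) \<noteq> 0 \<or> (1::real) \<noteq> 0" by simp
  ultimately show ?thesis unfolding locally_solvable_real_def by blast
qed

lemma Legendre_eq1_QuadRes: "Legendre a p = 1 \<Longrightarrow> QuadRes p a"
  by (simp add: Legendre_def split: if_splits)

lemma Legendre_QuadRes_not0: "QuadRes p a \<Longrightarrow> \<not> [a = 0] (mod p) \<Longrightarrow> Legendre a p = 1"
  by (simp add: Legendre_def)

lemma Legendre_not_QuadRes: "\<not> QuadRes p a \<Longrightarrow> \<not> [a = 0] (mod p) \<Longrightarrow> Legendre a p = -1"
  by (simp add: Legendre_def)

lemma solvable_at_2:
  assumes "odd d"
  shows "locally_solvable_at d 2"
proof -
  have "d mod 8 = 1 \<or> d mod 8 = 3 \<or> d mod 8 = 5 \<or> d mod 8 = 7" using assms by presburger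
  then obtain c x0 m where c: "[c * d = 1] (mod 8)" "Fh x0 1 = c * m^2"
  proof (elim disjE)
    assume "d mod 8 = 1"
    then have "[1 * d = 1] (mod 8)" by (simp add: cong_def)
    moreover have "Fh (0::int) 1 = 1 * 6^2" by (simp add: Fh_def)
    ultimately show ?thesis by (rule that)
  next
    assume "d mod 8 = 3"
    then have "[3 * d = 1] (mod 8)" unfolding cong_def by presburger
    moreover have "Fh (1::int) 1 = 3 * 3^2" by (simp add: Fh_def)
    ultimately show ?thesis by (rule that)
  next
    assume "d mod 8 = 5"
    then have "[13 * d = 1] (mod 8)" unfolding cong_def by presburger
    moreover have "Fh (-1::int) 1 = 13 * 1^2" by (simp add: Fh_def)
    ultimately show ?thesis by (rule that)
  next
    assume "d mod 8 = 7"
    then have "[(-1) * d = 1] (mod 8)" unfolding cong_def mult_minus1 by presburger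
    moreover have "Fh (-2::int) 1 = (-1) * 6^2" by (simp add: Fh_def)
    ultimately show ?thesis by (rule that)
  qed
  obtain s where s: "padic_int 2 s" "padic_nonzero 2 s" "\<forall>k. [s k ^ 2 = c * d] (mod int 2 ^ k)"
    using sqrt_2[OF c(1)] by blast
  show ?thesis by (rule point_from_sqrt[OF s c(2)])
qed

lemma solvable_from_QR:
  assumes p: "prime p" "p \<noteq> 2" and q: "QuadRes (int p) (c * d)" and nd: "\<not> int p dvd c * d"
    and F: "Fh x0 1 = c * m^2"
  shows "locally_solvable_at d p"
proof -
  obtain y0 where "[y0^2 = c * d] (mod int p)" using q unfolding QuadRes_def by blast
  then obtain s where s: "padic_int p s" "padic_nonzero p s" "\<forall>k. [s k ^ 2 = c * d] (mod int p ^ k)"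
    using sqrt_odd[OF p nd] by blast
  show ?thesis by (rule point_from_sqrt[OF s F])
qed

lemma only_if_part:
  assumes sq: "squarefree d" and ls: "locally_solvable_at d p" and pp: "prime p" and pd: "int p dvd d"
  shows "Legendre (int p) 13 = 1 \<or> p = 13"
proof (rule ccontr)
  assume nn: "\<not> (Legendre (int p) 13 = 1 \<or> p = 13)"
  show False
  proof (cases "p = 2")
    case True
    have "\<not> locally_solvable_at d 2"
    proof (rule obstruct)
      show "prime (2::nat)" by (rule two_is_prime_nat)
      show "squarefree d" by (rule sq)
      show "int 2 dvd d" using pd True by simp
    next
      fix x z assume "\<not> (int 2 dvd x \<and> int 2 dvd z)"
      then show "\<exists>e. even e \<and> e \<le> 2 \<and> int 2 ^ e dvd Fh x z \<and> \<not> int 2 ^ (e+1) dvd Fh x z"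
        by (rule key2)
    qed
    then show False using ls True by simp
  next
    case False
    then have p2: "2 < p" using prime_ge_2_nat[OF pp] by simp
    have n13: "p \<noteq> 13" using nn by simp
    have r: "Legendre 13 (int p) = Legendre (int p) 13"
      using Legendre_recip13[OF pp p2 n13] by simp
    have "Legendre (int p) 13 \<noteq> 0"
    proof
      assume "Legendre (int p) 13 = 0"
      then have "[int p = 0] (mod 13)" unfolding Legendre_def by (simp split: if_splits)
      then have "13 dvd int p" by (simp add: cong_0_iff)
      then show False using dvd13_nat' pp n13 by blast
    qed
    moreover have "Legendre (int p) 13 \<noteq> 1" using nn by simp
    ultimately have "Legendre (int p) 13 = -1" using Legendre_vals[of "int p" 13] by blast
    then have "Legendre 13 (int p) = -1" using r by simp
    then have nq: "\<not> QuadRes (int p) 13" unfolding Legendre_def by (simp split: if_splits)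
    have "\<not> locally_solvable_at d p"
    proof (rule obstruct)
      show "prime p" by (rule pp)
      show "squarefree d" by (rule sq)
      show "int p dvd d" by (rule pd)
    next
      fix x z assume "\<not> (int p dvd x \<and> int p dvd z)"
      then have "\<not> int p dvd Fh x z" using key_odd[OF pp False nq] by blast
      then show "\<exists>e. even e \<and> e \<le> 2 \<and> int p ^ e dvd Fh x z \<and> \<not> int p ^ (e+1) dvd Fh x z"
        by (intro exI[of _ 0]) simp
    qed
    then show False using ls by simp
  qed
qed


lemma case13:
  assumes sq: "squarefree d"
    and H: "\<forall>p::nat. prime p \<and> int p dvd d \<longrightarrow> Legendre (int p) 13 = 1 \<or> p = 13"
  shows "locally_solvable_at d 13"
proof -
  have d0: "d \<noteq> 0" using sq by auto
  show ?thesis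
  proof (cases "13 dvd d")
    case False
    have "Legendre d 13 = 1"
    proof (rule Legendre_prod13[OF d0], intro allI impI)
      fix q :: nat assume q: "prime q \<and> int q dvd d"
      have "q \<noteq> 13" using False q by auto
      then show "Legendre (int q) 13 = 1" using H q by blast
    qed
    then have "QuadRes 13 (1 * d)" by (simp add: Legendre_eq1_QuadRes)
    then have q: "QuadRes (int 13) (1 * d)" by simp
    have n: "\<not> int 13 dvd 1 * d" using False by simp
    have F: "Fh (0::int) 1 = 1 * 6^2" by (simp add: Fh_def)
    show ?thesis using solvable_from_QR[OF prime13 _ q n F] by simp
  next
    case True
    then obtain d' where d': "d = 13 * d'" by blast
    have nd': "\<not> 13 dvd d'"
    proof
      assume "13 dvd d'"
      then have "(13::int)^2 dvd d" using d' by (metis mult_dvd_mono dvd_refl power2_eq_square)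
      then have "(13::int) dvd 1" using sq squarefreeD by blast
      then show False by simp
    qed
    have d'0: "d' \<noteq> 0" using d0 d' by simp
    have "Legendre d' 13 = 1"
    proof (rule Legendre_prod13[OF d'0], intro allI impI)
      fix q :: nat assume q: "prime q \<and> int q dvd d'"
      then have qd: "int q dvd d" using d' by simp
      have "q \<noteq> 13" using nd' q by auto
      then show "Legendre (int q) 13 = 1" using H q qd by blast
    qed
    then have L: "Legendre (17 * d') 13 = 1" using Legendre_mult13[of 17 d'] Legendre_17_13 by simp
    then have "QuadRes 13 (17 * d')" by (rule Legendre_eq1_QuadRes)
    then obtain y0 where y0: "[y0^2 = 17 * d'] (mod int 13)" unfolding QuadRes_def by auto
    have n17: "\<not> int 13 dvd 17 * d'"
    proof
      assume "int 13 dvd 17 * d'"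
      then have "(13::int) dvd 17 \<or> 13 dvd d'" using prime_dvd_mult_iff[OF prime13i, of 17 d'] by simp
      then show False using nd' by simp
    qed
    have n2: "(13::nat) \<noteq> 2" by simp
    obtain t where t: "padic_int 13 t" "\<forall>k. [t k ^ 2 = 17 * d'] (mod int 13 ^ k)"
      using sqrt_odd[OF prime13 n2 n17 y0] by blast
    define s where "s = (\<lambda>k. 13 * t k)"
    have sI: "padic_int 13 s" using t(1) unfolding padic_int_def s_def by (auto intro: cong_mult)
    have sq2: "\<forall>k. [s k ^ 2 = 221 * d] (mod int 13 ^ k)"
    proof
      fix k
      have "[169 * t k ^ 2 = 169 * (17 * d')] (mod int 13 ^ k)" using t(2) by (intro cong_mult) auto
      then show "[s k ^ 2 = 221 * d] (mod int 13 ^ k)" unfolding s_def d' by (simp add: power_mult_distrib)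
    qed
    have "\<not> [s 2 = 0] (mod int 13 ^ 2)"
    proof
      assume "[s 2 = 0] (mod int 13 ^ 2)"
      then have "13 * 13 dvd 13 * t 2" unfolding s_def by (simp add: cong_0_iff power2_eq_square)
      then have "13 dvd t 2" using dvd_mult_cancel_left[of 13 13 "t 2"] by presburger
      then have "13 dvd t 2 ^ 2" by (simp add: power2_eq_square)
      moreover have "[t 2 ^ 2 = 17 * d'] (mod 13)"
      proof (rule cong_dvd_modulus)
        show "[t 2 ^ 2 = 17 * d'] (mod int 13 ^ 2)" using t(2) by blast
        show "(13::int) dvd int 13 ^ 2" by simp
      qed
      ultimately have "13 dvd 17 * d'" using cong_dvd_iff by blast
      then show False using n17 by simp
    qed
    then have sN: "padic_nonzero 13 s" unfolding padic_nonzero_def by blast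
    have "Fh (7::int) 1 = 221 * 3^2" by (simp add: Fh_def)
    then show "locally_solvable_at d 13" by (rule point_from_sqrt[OF sI sN sq2])
  qed
qed

lemma case_odd:
  assumes sq: "squarefree d"
    and H: "\<forall>p::nat. prime p \<and> int p dvd d \<longrightarrow> Legendre (int p) 13 = 1 \<or> p = 13"
    and pp: "prime p" and p2n: "p \<noteq> 2" and p13: "p \<noteq> 13"
  shows "locally_solvable_at d p"
proof -
  have p2: "2 < p" using prime_ge_2_nat[OF pp] p2n by simp
  show ?thesis
  proof (cases "QuadRes (int p) 13")
    case True
    then show ?thesis using root_point[OF pp p2n p13] by blast
  next
    case nq: False
    have n13: "\<not> [13 = 0] (mod int p)"
    proof
      assume "[13 = 0] (mod int p)"
      then have "int p dvd 13" by (simp add: cong_0_iff)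
      then show False using dvd13_nat pp p13 by blast
    qed
    have L13: "Legendre 13 (int p) = -1" using Legendre_not_QuadRes[OF nq n13] .
    have ndp: "\<not> int p dvd d"
    proof
      assume "int p dvd d"
      then have "Legendre (int p) 13 = 1" using H pp p13 by blast
      then have "Legendre 13 (int p) = 1" using Legendre_recip13[OF pp p2 p13] by simp
      then show False using L13 by simp
    qed
    have pi: "prime (int p)" using pp by simp
    show ?thesis
    proof (cases "QuadRes (int p) d")
      case True
      then have q: "QuadRes (int p) (1 * d)" by simp
      have n: "\<not> int p dvd 1 * d" using ndp by simp
      have F: "Fh (0::int) 1 = 1 * 6^2" by (simp add: Fh_def)
      show ?thesis by (rule solvable_from_QR[OF pp p2n q n F])
    next
      case False
      have "\<not> [d = 0] (mod int p)" using ndp by (simp add: cong_0_iff)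
      then have "Legendre d (int p) = -1" using Legendre_not_QuadRes[OF False] by blast
      then have "Legendre (13 * d) (int p) = 1" using Legendre_mult[OF pp p2, of 13 d] L13 by simp
      then have q: "QuadRes (int p) (13 * d)" by (rule Legendre_eq1_QuadRes)
      have "\<not> int p dvd 13" using n13 by (simp add: cong_0_iff)
      then have n: "\<not> int p dvd 13 * d" using ndp prime_dvd_mult_iff[OF pi, of 13 d] by simp
      have F: "Fh (-1::int) 1 = 13 * 1^2" by (simp add: Fh_def)
      show ?thesis by (rule solvable_from_QR[OF pp p2n q n F])
    qed
  qed
qed

theorem mainTheorem4:
  fixes d :: int
  assumes "squarefree d"
  shows "everywhere_locally_solvable d \<longleftrightarrow>
           (\<forall>p::nat. prime p \<and> int p dvd d \<longrightarrow> Legendre (int p) 13 = 1 \<or> p = 13)"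
proof
  assume els: "everywhere_locally_solvable d"
  show "\<forall>p::nat. prime p \<and> int p dvd d \<longrightarrow> Legendre (int p) 13 = 1 \<or> p = 13"
  proof (intro allI impI)
    fix p :: nat assume pp: "prime p \<and> int p dvd d"
    then have "locally_solvable_at d p" using els unfolding everywhere_locally_solvable_def by blast
    then show "Legendre (int p) 13 = 1 \<or> p = 13" using only_if_part[OF assms] pp by blast
  qed
next
  assume H: "\<forall>p::nat. prime p \<and> int p dvd d \<longrightarrow> Legendre (int p) 13 = 1 \<or> p = 13"
  have d0: "d \<noteq> 0" using assms by auto
  have "locally_solvable_at d p" if pp: "prime p" for p
  proof -
    consider "p = 2" | "p = 13" | "p \<noteq> 2" "p \<noteq> 13" by blast
    then show ?thesis
    proof cases
      case 1
      have "odd d"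
      proof
        assume "even d"
        then have "int 2 dvd d" by simp
        then have "Legendre (int 2) 13 = 1 \<or> (2::nat) = 13" using H two_is_prime_nat by blast
        then show False using Legendre_2_13 by simp
      qed
      then show ?thesis using 1 solvable_at_2 by simp
    next
      case 2
      then show ?thesis using case13[OF assms H] by simp
    next
      case 3
      then show ?thesis using case_odd[OF assms H pp] by simp
    qed
  qed
  then show "everywhere_locally_solvable d"
    unfolding everywhere_locally_solvable_def using real_part[OF d0] by blast
qed

end
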